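(* Let $U\in\mathbb{R}^{n\times d}$, let $\mathbf{x}_*\in\mathbb{R}^d$ be an $s$-sparse signal, $\mathbf{e}\in\mathbb{R}^n$, and $\mathbf{y}=U\mathbf{x}_*+\mathbf{e}$. Assume \[ \gamma := \delta_s + \sqrt{2}\,\theta_{s,s} + \delta_{3s} < 1 . \] Let $\Delta_1,\Delta_2,\ldots$ be a sequence with $\|\mathbf{x}_1-\mathbf{x}_*\|_2\le\Delta_1$ and $\Delta_{t+1}=\gamma\Delta_t+(1+\sqrt{2})\sqrt{s}\|U^\top\mathbf{e}\|_\infty$ for $t\ge1$. If Algorithm 1 is run with \[ \lambda_t=\frac{\delta_s+\sqrt{2}\theta_{s,s}}{\sqrt{s}}\Delta_t+\|U^\top\mathbf{e}\|_\infty, \] then for all $t\ge0$: (i) $|\mathcal{S}_{t+1}\setminus\mathcal{S}_*|\le s$, and (ii) $\|\mathbf{x}_{t+1}-\mathbf{x}_*\|_2\le\gamma^t\Delta_1+\frac{1-\gamma^t}{1-\gamma}(1+\sqrt{2})\sqrt{s}\|U^\top\mathbf{e}\|_\infty$.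
   Context: For $\mathbf{x}\in\mathbb{R}^d$, $\mathcal{S}(\mathbf{x})=\{i:[\mathbf{x}]_i\neq 0\}$; $\mathbf{x}$ is $s$-sparse if $|\mathcal{S}(\mathbf{x})|\le s$. $U_{\mathcal T}$ is the column submatrix of $U$ indexed by $\mathcal T$. $\delta_s$ is the smallest constant $\ge0$ with $(1-\delta_s)\|\mathbf{v}\|_2^2\le\|U_{\mathcal T}\mathbf{v}\|_2^2\le(1+\delta_s)\|\mathbf{v}\|_2^2$ for all $|\mathcal T|\le s$, $\mathbf{v}\in\mathbb{R}^{|\mathcal T|}$. $\theta_{s,s}$ (with $2s\le d$) is the smallest constant with $|\langle U_{\mathcal T}\mathbf{v},U_{\mathcal T'}\mathbf{v}'\rangle|\le\theta_{s,s}\|\mathbf{v}\|_2\|\mathbf{v}'\|_2$ for all disjoint $\mathcal T,\mathcal T'$ of size at most $s$. Algorithm 1: given $\lambda_1,\lambda_2,\ldots>0$, set $\mathbf{x}_1=0$ and for $t\ge1$, $\widehat{\mathbf{x}}_t=\mathbf{x}_t-U^\top(U\mathbf{x}_t-\mathbf{y})$, $\mathbf{x}_{t+1}=\mathrm{sign}(\widehat{\mathbf{x}}_t)[|\widehat{\mathbf{x}}_t|-\lambda_t]_+$ (componentwise soft-thresholding). $\mathcal{S}_t=\mathcal{S}(\mathbf{x}_t)$, $\mathcal{S}_*=\mathcal{S}(\mathbf{x}_* )$. *)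

theory Defs
  imports "HOL-Analysis.Analysis"
begin

text \<open>Vectors in R^d are real^'d, matrices U in R^(n x d) are real^'d^'n.
  Column submatrices U_T applied to v are represented as U *v w with w supported in T
  (zero extension of v).\<close>

definition supp :: "real^'d \<Rightarrow> 'd set" where
  "supp x = {i. x $ i \<noteq> 0}"

definition linf :: "real^'d \<Rightarrow> real" where
  "linf x = Max (range (\<lambda>i. \<bar>x $ i\<bar>))"

definition rip_const :: "real^'d^'n \<Rightarrow> nat \<Rightarrow> real" where
  "rip_const U s = Inf {\<delta>. \<delta> \<ge> 0 \<and>
     (\<forall>T w. card T \<le> s \<and> supp w \<subseteq> T \<longrightarrow>
        (1 - \<delta>) * (norm w)^2 \<le> (norm (U *v w))^2 \<and>
        (norm (U *v w))^2 \<le> (1 + \<delta>) * (norm w)^2)}"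

definition roc_const :: "real^'d^'n \<Rightarrow> nat \<Rightarrow> real" where
  "roc_const U s = Inf {\<theta>.
     (\<forall>T T' w w'. card T \<le> s \<and> card T' \<le> s \<and> T \<inter> T' = {} \<and>
        supp w \<subseteq> T \<and> supp w' \<subseteq> T' \<longrightarrow>
        \<bar>(U *v w) \<bullet> (U *v w')\<bar> \<le> \<theta> * norm w * norm w')}"

definition soft_thresh :: "real^'d \<Rightarrow> real \<Rightarrow> real^'d" where
  "soft_thresh v l = (\<chi> i. sgn (v $ i) * max (\<bar>v $ i\<bar> - l) 0)"

end

theory Submission
  imports Defs
begin

lemma Ubound: obtains K where "K > 0" "\<And>w. norm ((U::real^'d^'n) *v w) \<le> norm w * K"
  using bounded_linear.pos_bounded[of "\<lambda>x. U *v x"] by auto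

lemma supp_add: "supp (a + b) \<subseteq> supp a \<union> supp b" by (auto simp: supp_def)
lemma supp_diff: "supp (a - b) \<subseteq> supp a \<union> supp b" by (auto simp: supp_def)
lemma supp_scale: "supp (c *\<^sub>R a) \<subseteq> supp a" by (auto simp: supp_def)
lemma supp_zero[simp]: "supp 0 = {}" by (auto simp: supp_def)

lemma rip_nonneg: "rip_const (U::real^'d^'n) k \<ge> 0"
proof -
  obtain K where K: "K > 0" "\<And>w. norm (U *v w) \<le> norm w * K" using Ubound by blast
  have "K^2 + 1 \<in> {\<delta>. \<delta> \<ge> 0 \<and>
     (\<forall>T w. card T \<le> k \<and> supp w \<subseteq> T \<longrightarrow>
        (1 - \<delta>) * (norm w)^2 \<le> (norm (U *v w))^2 \<and>
        (norm (U *v w))^2 \<le> (1 + \<delta>) * (norm w)^2)}"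
  proof (safe)
    fix T and w :: "real^'d"
    have "(norm (U *v w))^2 \<le> (norm w * K)^2" using K(2)[of w] by (simp add: power_mono)
    moreover have "0 \<le> (norm w)^2" by simp
    ultimately show "(norm (U *v w))^2 \<le> (1 + (K^2+1)) * (norm w)^2"
      by (simp add: power_mult_distrib algebra_simps) (insert zero_le_power2[of "norm w"], linarith)
    have "0 \<le> K^2 * (norm w)^2" by simp
    moreover have "(1 - (K^2+1)) * (norm w)^2 = - (K^2 * (norm w)^2)" by (simp add: algebra_simps)
    moreover have "0 \<le> (norm (U *v w))^2" by simp
    ultimately show "(1 - (K^2+1)) * (norm w)^2 \<le> (norm (U *v w))^2" by linarith
  qed simp
  then show ?thesis unfolding rip_const_def by (intro cInf_greatest; blast)
qed

lemma rip_bound: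
  assumes "card T \<le> k" "supp w \<subseteq> T"
  shows "\<bar>(norm w)^2 - (norm ((U::real^'d^'n) *v w))^2\<bar> \<le> rip_const U k * (norm w)^2"
proof -
  define S where "S = {\<delta>. \<delta> \<ge> 0 \<and>
     (\<forall>T w. card T \<le> k \<and> supp w \<subseteq> T \<longrightarrow>
        (1 - \<delta>) * (norm w)^2 \<le> (norm (U *v w))^2 \<and>
        (norm (U *v w))^2 \<le> (1 + \<delta>) * (norm w)^2)}"
  obtain K where K: "K > 0" "\<And>w. norm (U *v w) \<le> norm w * K" using Ubound by blast
  have "K^2 + 1 \<in> S" unfolding S_def
  proof (safe)
    fix T and w :: "real^'d"
    have "(norm (U *v w))^2 \<le> (norm w * K)^2" using K(2)[of w] by (simp add: power_mono)
    moreover have "0 \<le> (norm w)^2" by simp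
    ultimately show "(norm (U *v w))^2 \<le> (1 + (K^2+1)) * (norm w)^2"
      by (simp add: power_mult_distrib algebra_simps) (insert zero_le_power2[of "norm w"], linarith)
    have "0 \<le> K^2 * (norm w)^2" by simp
    moreover have "(1 - (K^2+1)) * (norm w)^2 = - (K^2 * (norm w)^2)" by (simp add: algebra_simps)
    moreover have "0 \<le> (norm (U *v w))^2" by simp
    ultimately show "(1 - (K^2+1)) * (norm w)^2 \<le> (norm (U *v w))^2" by linarith
  qed simp
  hence ne: "S \<noteq> {}" by auto
  show ?thesis
  proof (cases "w = 0")
    case True then show ?thesis by simp
  next
    case False
    hence pos: "(norm w)^2 > 0" by simp
    have "\<bar>(norm w)^2 - (norm (U *v w))^2\<bar> / (norm w)^2 \<le> Inf S"
    proof (rule cInf_greatest[OF ne])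
      fix \<delta> assume "\<delta> \<in> S"
      hence "(1 - \<delta>) * (norm w)^2 \<le> (norm (U *v w))^2 \<and>
        (norm (U *v w))^2 \<le> (1 + \<delta>) * (norm w)^2" using assms unfolding S_def by blast
      hence "\<bar>(norm w)^2 - (norm (U *v w))^2\<bar> \<le> \<delta> * (norm w)^2" by (auto simp: algebra_simps)
      then show "\<bar>(norm w)^2 - (norm (U *v w))^2\<bar> / (norm w)^2 \<le> \<delta>"
        using pos by (simp add: divide_le_eq)
    qed
    then show ?thesis using pos unfolding rip_const_def S_def[symmetric] by (simp add: divide_le_eq)
  qed
qed

lemma aux4:
  fixes P M X A B d :: real
  assumes "\<bar>P\<bar> \<le> d * A" "\<bar>M\<bar> \<le> d * B" "P - M = 4 * X" "A + B = 4"
  shows "\<bar>X\<bar> \<le> d"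
proof -
  have "d * A + d * B = d * 4" using assms(4) by (simp add: distrib_left[symmetric])
  then show ?thesis using assms(1-3) by linarith
qed

lemma rip_inner:
  assumes "card T \<le> k" "supp u \<subseteq> T" "supp v \<subseteq> T"
  shows "\<bar>u \<bullet> v - ((U::real^'d^'n) *v u) \<bullet> (U *v v)\<bar> \<le> rip_const U k * norm u * norm v"
proof (cases "u = 0 \<or> v = 0")
  case True then show ?thesis by auto
next
  case False
  hence nu: "norm u > 0" and nv: "norm v > 0" by auto
  define a where "a = (1 / norm u) *\<^sub>R u"
  define b where "b = (1 / norm v) *\<^sub>R v"
  have na: "a \<bullet> a = 1" using nu unfolding a_def
    by (simp add: power2_norm_eq_inner[symmetric] power2_eq_square)
  have nb: "b \<bullet> b = 1" using nv unfolding b_def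
    by (simp add: power2_norm_eq_inner[symmetric] power2_eq_square)
  have sa: "supp a \<subseteq> T" using assms(2) supp_scale unfolding a_def by blast
  have sb: "supp b \<subseteq> T" using assms(3) supp_scale unfolding b_def by blast
  have sp: "supp (a + b) \<subseteq> T" using sa sb supp_add by blast
  have sm: "supp (a - b) \<subseteq> T" using sa sb supp_diff by blast
  let ?\<delta> = "rip_const U k"
  have p: "\<bar>(a+b) \<bullet> (a+b) - (U *v (a+b)) \<bullet> (U *v (a+b))\<bar> \<le> ?\<delta> * ((a+b) \<bullet> (a+b))"
    using rip_bound[OF assms(1) sp, of U] by (simp add: power2_norm_eq_inner)
  have m: "\<bar>(a-b) \<bullet> (a-b) - (U *v (a-b)) \<bullet> (U *v (a-b))\<bar> \<le> ?\<delta> * ((a-b) \<bullet> (a-b))"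
    using rip_bound[OF assms(1) sm, of U] by (simp add: power2_norm_eq_inner)
  have e1: "((a+b) \<bullet> (a+b) - (U *v (a+b)) \<bullet> (U *v (a+b))) - ((a-b) \<bullet> (a-b) - (U *v (a-b)) \<bullet> (U *v (a-b)))
     = 4 * (a \<bullet> b - (U *v a) \<bullet> (U *v b))"
    by (simp add: matrix_vector_right_distrib matrix_vector_mult_diff_distrib inner_add_left inner_add_right
        inner_diff_left inner_diff_right inner_commute algebra_simps)
  have e2: "(a+b) \<bullet> (a+b) + (a-b) \<bullet> (a-b) = 4"
    using na nb by (simp add: inner_add_left inner_add_right inner_diff_left inner_diff_right inner_commute)
  have e3: "?\<delta> * ((a+b) \<bullet> (a+b)) + ?\<delta> * ((a-b) \<bullet> (a-b)) = ?\<delta> * 4"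
    using e2 by (simp add: distrib_left[symmetric])
  have ab: "\<bar>a \<bullet> b - (U *v a) \<bullet> (U *v b)\<bar> \<le> ?\<delta>"
    by (rule aux4[OF p m e1 e2])
  have "a \<bullet> b - (U *v a) \<bullet> (U *v b) = (u \<bullet> v - (U *v u) \<bullet> (U *v v)) / (norm u * norm v)"
    unfolding a_def b_def by (simp add: matrix_vector_mult_scaleR algebra_simps divide_simps)
  with ab have "\<bar>u \<bullet> v - (U *v u) \<bullet> (U *v v)\<bar> / (norm u * norm v) \<le> ?\<delta>"
    using nu nv by (simp add: abs_divide)
  then show ?thesis using nu nv by (simp add: divide_le_eq mult.assoc)
qed

lemma roc_bound:
  assumes "card T \<le> k" "card T' \<le> k" "T \<inter> T' = {}" "supp w \<subseteq> T" "supp w' \<subseteq> T'"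
  shows "\<bar>((U::real^'d^'n) *v w) \<bullet> (U *v w')\<bar> \<le> roc_const U k * norm w * norm w'"
proof -
  define S where "S = {\<theta>.
     (\<forall>T T' w w'. card T \<le> k \<and> card T' \<le> k \<and> T \<inter> T' = {} \<and>
        supp w \<subseteq> T \<and> supp w' \<subseteq> T' \<longrightarrow>
        \<bar>(U *v w) \<bullet> (U *v w')\<bar> \<le> \<theta> * norm w * norm w')}"
  obtain K where K: "K > 0" "\<And>w. norm (U *v w) \<le> norm w * K" using Ubound by blast
  have "K^2 \<in> S" unfolding S_def
  proof (safe)
    fix w w' :: "real^'d"
    have "\<bar>(U *v w) \<bullet> (U *v w')\<bar> \<le> norm (U *v w) * norm (U *v w')" by (rule Cauchy_Schwarz_ineq2)
    also have "\<dots> \<le> (norm w * K) * (norm w' * K)" by (rule mult_mono[OF K(2) K(2)]) (use K in auto)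
    finally show "\<bar>(U *v w) \<bullet> (U *v w')\<bar> \<le> K^2 * norm w * norm w'" by (simp add: power2_eq_square algebra_simps)
  qed
  hence ne: "S \<noteq> {}" by auto
  show ?thesis
  proof (cases "w = 0 \<or> w' = 0")
    case True then show ?thesis by auto
  next
    case False
    hence pos: "norm w * norm w' > 0" by simp
    have "\<bar>(U *v w) \<bullet> (U *v w')\<bar> / (norm w * norm w') \<le> Inf S"
    proof (rule cInf_greatest[OF ne])
      fix \<theta> assume "\<theta> \<in> S"
      hence "\<bar>(U *v w) \<bullet> (U *v w')\<bar> \<le> \<theta> * norm w * norm w'" using assms unfolding S_def by blast
      then show "\<bar>(U *v w) \<bullet> (U *v w')\<bar> / (norm w * norm w') \<le> \<theta>"
        using pos by (simp add: divide_le_eq mult.assoc)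
    qed
    then show ?thesis using pos unfolding roc_const_def S_def[symmetric] by (simp add: divide_le_eq mult.assoc)
  qed
qed

lemma supp_axis: "supp (axis i (1::real) :: real^'d) = {i}"
  by (auto simp: supp_def axis_def)

lemma roc_nonneg:
  assumes "1 \<le> k" "2 \<le> CARD('d)"
  shows "roc_const (U::real^'d^'n) k \<ge> 0"
proof -
  obtain i j :: 'd where ij: "i \<noteq> j"
  proof -
    have "\<not> (\<forall>i j::'d. i = j)"
    proof
      assume "\<forall>i j::'d. i = j"
      then have "card (UNIV::'d set) \<le> Suc 0" by (subst card_le_Suc0_iff_eq) auto
      with assms show False by simp
    qed
    then show ?thesis using that by blast
  qed
  have "\<bar>(U *v axis i 1) \<bullet> (U *v axis j 1)\<bar> \<le> roc_const U k * norm (axis i (1::real) :: real^'d) * norm (axis j (1::real) :: real^'d)"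
    by (rule roc_bound[of "{i}" k "{j}"]) (use assms ij in \<open>auto simp: supp_axis\<close>)
  then have "\<bar>(U *v axis i 1) \<bullet> (U *v axis j 1)\<bar> \<le> roc_const U k" by (simp add: norm_axis_1)
  then show ?thesis by (meson abs_ge_zero order_trans)
qed

definition proj :: "'d set \<Rightarrow> real^'d \<Rightarrow> real^'d" where
  "proj T v = (\<chi> i. if i \<in> T then v $ i else 0)"

lemma proj_nth: "proj T v $ i = (if i \<in> T then v $ i else 0)"
  by (simp add: proj_def)

lemma supp_proj: "supp (proj T v) \<subseteq> T \<inter> supp v"
  by (auto simp: supp_def proj_nth split: if_splits)

lemma norm_sq_sum: "(norm (v::real^'d))^2 = (\<Sum>i\<in>UNIV. (v $ i)^2)"
  unfolding norm_vec_def L2_set_def by (simp add: sum_nonneg)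

lemma norm_proj_sq: "(norm (proj T (v::real^'d)))^2 = (\<Sum>i\<in>T. (v $ i)^2)"
proof -
  have "(norm (proj T v))^2 = (\<Sum>i\<in>UNIV. if i \<in> T then (v $ i)^2 else 0)"
    unfolding norm_sq_sum by (intro sum.cong) (auto simp: proj_nth)
  also have "\<dots> = (\<Sum>i\<in>UNIV \<inter> T. (v $ i)^2)" by (rule sum.inter_restrict[symmetric]) simp
  finally show ?thesis by simp
qed

lemma proj_inner_self: "proj T g \<bullet> (g::real^'d) = (norm (proj T g))^2"
proof -
  have "proj T g \<bullet> g = (\<Sum>i\<in>UNIV. if i \<in> T then (g $ i)^2 else 0)"
    unfolding inner_vec_def by (intro sum.cong) (auto simp: proj_nth power2_eq_square)
  also have "\<dots> = (\<Sum>i\<in>UNIV \<inter> T. (g $ i)^2)" by (rule sum.inter_restrict[symmetric]) simp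
  finally show ?thesis by (simp add: norm_proj_sq)
qed

lemma inner_disj: "supp u \<inter> supp (v::real^'d) = {} \<Longrightarrow> u \<bullet> v = 0"
  unfolding inner_vec_def by (intro sum.neutral) (auto simp: supp_def)

lemma gram: "(v::real^'d) \<bullet> (h - transpose (U::real^'d^'n) *v (U *v h)) = v \<bullet> h - (U *v v) \<bullet> (U *v h)"
  by (simp add: inner_diff_right) (metis dot_lmul_matrix inner_commute)

lemma sum_bound:
  fixes a b c H d t :: real
  assumes "a^2 + b^2 + c^2 = H^2" "0 \<le> a" "0 \<le> b" "0 \<le> c" "0 \<le> H" "0 \<le> d" "0 \<le> t"
  shows "d * a + t * (b + c) \<le> (d + sqrt 2 * t) * H"
proof -
  have "a^2 \<le> H^2" using assms(1) zero_le_power2[of b] zero_le_power2[of c] by linarith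
  hence aH: "a \<le> H" using assms power2_le_imp_le by blast
  have "(b + c)^2 \<le> 2 * H^2"
  proof -
    have e: "(b+c)^2 + (b-c)^2 = 2 * (b^2+c^2)" by (simp add: power2_sum power2_diff)
    have "(b+c)^2 \<le> 2 * (b^2 + c^2)" using e zero_le_power2[of "b-c"] by (smt (z3))
    also have "\<dots> \<le> 2 * H^2" using assms(1) zero_le_power2[of a] by (smt (z3))
    finally show ?thesis .
  qed
  hence "b + c \<le> sqrt (2 * H^2)" by (simp add: real_le_rsqrt)
  also have "\<dots> = sqrt 2 * H" using assms by (simp add: real_sqrt_mult)
  finally have bc: "b + c \<le> sqrt 2 * H" .
  have "d * a \<le> d * H" using aH assms by (simp add: mult_left_mono)
  moreover have "t * (b + c) \<le> t * (sqrt 2 * H)" using bc assms by (simp add: mult_left_mono)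
  ultimately show ?thesis by (simp add: algebra_simps)
qed

lemma card_le_of_subset: "A \<subseteq> B \<Longrightarrow> card B \<le> k \<Longrightarrow> card (A::'d::finite set) \<le> k"
  by (meson card_mono finite le_trans)

lemma key_bound:
  fixes U :: "real^'d^'n" and h :: "real^'d"
  assumes s1: "1 \<le> s" and sd: "2 * s \<le> CARD('d)"
    and cQ: "card Q \<le> s" and cA: "card A \<le> s" and QA: "Q \<inter> A = {}"
    and cB: "card (supp h - A) \<le> s"
  shows "norm (proj Q (h - transpose U *v (U *v h))) \<le> (rip_const U s + sqrt 2 * roc_const U s) * norm h"
proof -
  define g where "g = h - transpose U *v (U *v h)"
  define v where "v = proj Q g"
  define hQ where "hQ = proj Q h"
  define hA where "hA = proj A h"
  define hB where "hB = h - hQ - hA"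
  let ?\<delta> = "rip_const U s" and ?\<theta> = "roc_const U s"
  have d0: "?\<delta> \<ge> 0" by (rule rip_nonneg)
  have t0: "?\<theta> \<ge> 0" using s1 sd by (intro roc_nonneg) auto
  have sv: "supp v \<subseteq> Q" using supp_proj unfolding v_def by blast
  have sQ: "supp hQ \<subseteq> Q" using supp_proj unfolding hQ_def by blast
  have sA: "supp hA \<subseteq> A" using supp_proj unfolding hA_def by blast
  have hB_nth: "hB $ i = (if i \<in> Q \<or> i \<in> A then 0 else h $ i)" for i
    using QA unfolding hB_def hQ_def hA_def by (auto simp: proj_nth)
  have sB: "supp hB \<subseteq> supp h - A - Q" by (auto simp: supp_def hB_nth split: if_splits)
  have cB': "card (supp hB) \<le> s" using card_le_of_subset[OF _ cB, of "supp hB"] sB by blast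
  have QB: "Q \<inter> supp hB = {}" using sB by blast
  have vv: "(norm v)^2 = v \<bullet> g" unfolding v_def by (simp add: proj_inner_self)
  also have "\<dots> = v \<bullet> h - (U *v v) \<bullet> (U *v h)" unfolding g_def by (rule gram)
  also have "\<dots> = (v \<bullet> hQ - (U *v v) \<bullet> (U *v hQ)) - (U *v v) \<bullet> (U *v hA) - (U *v v) \<bullet> (U *v hB)"
  proof -
    have hd: "h = hQ + hA + hB" unfolding hB_def by simp
    have "v \<bullet> hA = 0" using sv sA QA by (intro inner_disj) blast
    moreover have "v \<bullet> hB = 0" using sv QB by (intro inner_disj) blast
    moreover have "v \<bullet> h = v \<bullet> hQ + v \<bullet> hA + v \<bullet> hB"
      by (subst hd) (simp only: inner_add_right)
    moreover have "(U *v v) \<bullet> (U *v h) = (U *v v) \<bullet> (U *v hQ) + (U *v v) \<bullet> (U *v hA) + (U *v v) \<bullet> (U *v hB)"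
      by (subst hd) (simp only: matrix_vector_right_distrib inner_add_right)
    ultimately show ?thesis by linarith
  qed
  finally have eq: "(norm v)^2 = (v \<bullet> hQ - (U *v v) \<bullet> (U *v hQ)) - (U *v v) \<bullet> (U *v hA) - (U *v v) \<bullet> (U *v hB)" .
  have b1: "\<bar>v \<bullet> hQ - (U *v v) \<bullet> (U *v hQ)\<bar> \<le> ?\<delta> * norm v * norm hQ"
    by (rule rip_inner[OF cQ sv sQ])
  have b2: "\<bar>(U *v v) \<bullet> (U *v hA)\<bar> \<le> ?\<theta> * norm v * norm hA"
    by (rule roc_bound[OF cQ cA QA sv sA])
  have b3: "\<bar>(U *v v) \<bullet> (U *v hB)\<bar> \<le> ?\<theta> * norm v * norm hB"
    by (rule roc_bound[OF cQ cB' QB sv order_refl])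
  have "(norm v)^2 \<le> norm v * (?\<delta> * norm hQ + ?\<theta> * (norm hA + norm hB))"
  proof -
    have "norm v * (?\<delta> * norm hQ + ?\<theta> * (norm hA + norm hB)) =
      ?\<delta> * norm v * norm hQ + ?\<theta> * norm v * norm hA + ?\<theta> * norm v * norm hB"
      by (simp add: algebra_simps)
    then show ?thesis using eq abs_le_D1[OF b1] abs_le_D2[OF b2] abs_le_D2[OF b3] by linarith
  qed
  hence nv: "norm v \<le> ?\<delta> * norm hQ + ?\<theta> * (norm hA + norm hB)"
  proof (cases "norm v = 0")
    case True then show ?thesis using d0 t0 by simp
  next
    case False
    then have "norm v > 0" by simp
    moreover assume "(norm v)^2 \<le> norm v * (?\<delta> * norm hQ + ?\<theta> * (norm hA + norm hB))"
    ultimately show ?thesis by (simp add: power2_eq_square)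
  qed
  have split: "(norm hQ)^2 + (norm hA)^2 + (norm hB)^2 = (norm h)^2"
  proof -
    have "(norm hQ)^2 + (norm hA)^2 + (norm hB)^2 = (\<Sum>i\<in>UNIV. (hQ$i)^2 + (hA$i)^2 + (hB$i)^2)"
      by (simp add: norm_sq_sum sum.distrib)
    also have "\<dots> = (\<Sum>i\<in>UNIV. (h$i)^2)"
      using QA by (intro sum.cong) (auto simp: hQ_def hA_def hB_nth proj_nth)
    finally show ?thesis by (simp add: norm_sq_sum)
  qed
  have "?\<delta> * norm hQ + ?\<theta> * (norm hA + norm hB) \<le> (?\<delta> + sqrt 2 * ?\<theta>) * norm h"
    by (rule sum_bound[OF split]) (use d0 t0 in auto)
  with nv show ?thesis unfolding v_def g_def by linarith
qed

lemma st_nth: "soft_thresh v l $ i = sgn (v $ i) * max (\<bar>v $ i\<bar> - l) 0"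
  by (simp add: soft_thresh_def)

lemma st_nz: "(l::real) \<ge> 0 \<Longrightarrow> sgn a * max (\<bar>a\<bar> - l) 0 \<noteq> 0 \<Longrightarrow> \<bar>a\<bar> > l"
  by (auto simp: max_def split: if_splits)

lemma st_diff: "(l::real) \<ge> 0 \<Longrightarrow> \<bar>a - sgn a * max (\<bar>a\<bar> - l) 0\<bar> \<le> l"
  by (cases "a > 0"; cases "a < 0") (auto simp: max_def sgn_if)

lemma st_abs: "(l::real) \<ge> 0 \<Longrightarrow> \<bar>sgn a * max (\<bar>a\<bar> - l) 0\<bar> = max (\<bar>a\<bar> - l) 0"
  by (auto simp: max_def sgn_if abs_mult)

lemma linf_ge: "\<bar>v $ i\<bar> \<le> linf v"
  unfolding linf_def by (rule Max_ge) auto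

lemma bound3:
  fixes U :: "real^'d^'n" and h :: "real^'d"
  assumes "card (W \<union> supp h) \<le> k"
  shows "norm (proj W (h - transpose U *v (U *v h))) \<le> rip_const U k * norm h"
proof -
  define v where "v = proj W (h - transpose U *v (U *v h))"
  have sv: "supp v \<subseteq> W \<union> supp h" using supp_proj unfolding v_def by blast
  have "(norm v)^2 = v \<bullet> (h - transpose U *v (U *v h))" unfolding v_def by (simp add: proj_inner_self)
  also have "\<dots> = v \<bullet> h - (U *v v) \<bullet> (U *v h)" by (rule gram)
  finally have eq: "(norm v)^2 = v \<bullet> h - (U *v v) \<bullet> (U *v h)" .
  have "\<bar>v \<bullet> h - (U *v v) \<bullet> (U *v h)\<bar> \<le> rip_const U k * norm v * norm h"
    by (rule rip_inner[OF assms sv]) blast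
  hence "(norm v)^2 \<le> rip_const U k * norm v * norm h" using eq abs_le_D1 by fastforce
  hence le: "(norm v)^2 \<le> norm v * (rip_const U k * norm h)" by (simp add: ac_simps)
  show ?thesis
  proof (cases "norm v = 0")
    case True then show ?thesis using rip_nonneg[of U k] unfolding v_def by simp
  next
    case False
    then have "norm v > 0" by simp
    with le show ?thesis unfolding v_def[symmetric] by (simp add: power2_eq_square)
  qed
qed

lemma norm_ind:
  fixes a :: real assumes "a \<ge> 0" "card S \<le> s"
  shows "norm ((\<chi> i. if i \<in> S then a else 0) :: real^'d) \<le> a * sqrt (real s)"
proof -
  have "(\<chi> i. if i \<in> S then a else 0) = proj S ((\<chi> i. a) :: real^'d)"
    by (simp add: vec_eq_iff proj_nth)
  hence "(norm ((\<chi> i. if i \<in> S then a else 0) :: real^'d))^2 = real (card S) * a^2"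
    by (simp add: norm_proj_sq)
  also have "\<dots> \<le> real s * a^2" using assms by (simp add: mult_right_mono)
  also have "\<dots> = (a * sqrt (real s))^2" by (simp add: power_mult_distrib)
  finally have sq: "(norm ((\<chi> i. if i \<in> S then a else 0) :: real^'d))^2 \<le> (a * sqrt (real s))^2" .
  have "0 \<le> a * sqrt (real s)" using assms by simp
  with sq show ?thesis by (rule power2_le_imp_le)
qed

lemma step:
  fixes U :: "real^'d^'n" and xs xt :: "real^'d" and e :: "real^'n" and D lam :: real
  assumes s1: "1 \<le> s" and sd: "2 * s \<le> CARD('d)"
    and cS: "card (supp xs) \<le> s" and cT: "card (supp xt - supp xs) \<le> s"
    and hD: "norm (xt - xs) \<le> D"
    and lam: "lam = (rip_const U s + sqrt 2 * roc_const U s) / sqrt (real s) * D + linf (transpose U *v e)"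
    and xn: "xn = soft_thresh (xt - transpose U *v (U *v xt - (U *v xs + e))) lam"
  shows "card (supp xn - supp xs) \<le> s \<and>
    norm (xn - xs) \<le> (rip_const U s + sqrt 2 * roc_const U s + rip_const U (3 * s)) * D
       + 2 * sqrt (real s) * linf (transpose U *v e)"
proof -
  define h where "h = xt - xs"
  define g where "g = h - transpose U *v (U *v h)"
  define Ev where "Ev = transpose U *v e"
  define E where "E = linf Ev"
  define c where "c = rip_const U s + sqrt 2 * roc_const U s"
  define tau where "tau = c / sqrt (real s) * D"
  have lam': "lam = tau + E" unfolding lam tau_def c_def E_def Ev_def by simp
  have xh: "xt - transpose U *v (U *v xt - (U *v xs + e)) = xs + g + Ev"
    unfolding g_def h_def Ev_def
    by (simp add: matrix_vector_mult_diff_distrib matrix_vector_right_distrib algebra_simps)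
  have xn_nth: "xn $ i = sgn (xs$i + g$i + Ev$i) * max (\<bar>xs$i + g$i + Ev$i\<bar> - lam) 0" for i
    unfolding xn xh by (simp add: st_nth)
  have EvE: "\<bar>Ev $ i\<bar> \<le> E" for i unfolding E_def by (rule linf_ge)
  have E0: "E \<ge> 0" using EvE[of undefined] by linarith
  have D0: "D \<ge> 0" using hD norm_ge_zero order_trans by blast
  have "0 \<le> roc_const U s" using s1 sd by (intro roc_nonneg) auto
  hence c0: "c \<ge> 0" unfolding c_def using rip_nonneg[of U s] by simp
  have sq: "sqrt (real s) > 0" using s1 by simp
  have tau0: "tau \<ge> 0" unfolding tau_def using c0 D0 sq by simp
  have lam0: "lam \<ge> 0" using lam' tau0 E0 by simp
  have shs: "supp h - supp xs \<subseteq> supp xt - supp xs" unfolding h_def by (auto simp: supp_def)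
  have cH: "card (supp h - supp xs) \<le> s" using card_le_of_subset[OF shs cT] .
  have nh: "norm h \<le> D" using hD unfolding h_def .
  define Q0 where "Q0 = {i. i \<notin> supp xs \<and> \<bar>g $ i\<bar> > tau}"
  have sub: "supp xn - supp xs \<subseteq> Q0"
  proof
    fix i assume i: "i \<in> supp xn - supp xs"
    hence xs0: "xs $ i = 0" by (simp add: supp_def)
    have "xn $ i \<noteq> 0" using i by (simp add: supp_def)
    hence "\<bar>xs$i + g$i + Ev$i\<bar> > lam" using st_nz[OF lam0] xn_nth[of i] by metis
    hence "\<bar>g$i + Ev$i\<bar> > lam" using xs0 by simp
    moreover have "\<bar>g$i + Ev$i\<bar> \<le> \<bar>g$i\<bar> + E" using EvE[of i] abs_triangle_ineq[of "g$i" "Ev$i"] by linarith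
    ultimately have "\<bar>g$i\<bar> > tau" using lam' by linarith
    then show "i \<in> Q0" using i unfolding Q0_def by simp
  qed
  have cQ0: "card Q0 \<le> s"
  proof (rule ccontr)
    assume "\<not> card Q0 \<le> s"
    hence "s \<le> card Q0" by simp
    then obtain Q where QQ: "Q \<subseteq> Q0" and cQ: "card Q = s" by (meson obtain_subset_with_card_n)
    have QA: "Q \<inter> supp xs = {}" using QQ unfolding Q0_def by blast
    have kb: "norm (proj Q g) \<le> c * norm h"
      unfolding g_def c_def by (rule key_bound[OF s1 sd _ cS QA cH]) (simp add: cQ)
    also have "\<dots> \<le> c * D" using nh c0 by (simp add: mult_left_mono)
    finally have kb2: "norm (proj Q g) \<le> c * D" .
    have "(norm (proj Q g))^2 \<le> (c * D)^2" using kb2 by (simp add: power_mono)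
    moreover have "(norm (proj Q g))^2 > (c * D)^2"
    proof -
      have Qne: "Q \<noteq> {}" using cQ s1 by auto
      have "(\<Sum>i\<in>Q. tau^2) < (\<Sum>i\<in>Q. (g $ i)^2)"
      proof (rule sum_strict_mono[OF finite Qne])
        fix i assume "i \<in> Q"
        hence "\<bar>g $ i\<bar> > tau" using QQ unfolding Q0_def by blast
        then show "tau^2 < (g $ i)^2" using tau0
          by (metis abs_of_nonneg power2_abs power_strict_mono zero_less_numeral)
      qed
      moreover have "(\<Sum>i\<in>Q. tau^2) = (c * D)^2"
        using cQ sq unfolding tau_def by (simp add: power_divide power_mult_distrib)
      ultimately show ?thesis by (simp add: norm_proj_sq)
    qed
    ultimately show False by linarith
  qed
  have part1: "card (supp xn - supp xs) \<le> s" using card_le_of_subset[OF sub cQ0] .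
  define W where "W = supp xs \<union> supp xn"
  have WH: "W \<union> supp h \<subseteq> supp xs \<union> (supp xn - supp xs) \<union> (supp xt - supp xs)"
    unfolding W_def h_def by (auto simp: supp_def)
  have "card (supp xs \<union> (supp xn - supp xs) \<union> (supp xt - supp xs)) \<le> s + s + s"
    using card_Un_le[of "supp xs \<union> (supp xn - supp xs)" "supp xt - supp xs"]
      card_Un_le[of "supp xs" "supp xn - supp xs"] cS part1 cT by linarith
  hence cW: "card (W \<union> supp h) \<le> 3 * s" using card_le_of_subset[OF WH] by simp
  have b3: "norm (proj W g) \<le> rip_const U (3 * s) * norm h"
    unfolding g_def by (rule bound3[OF cW])
  define r :: "real^'d" where "r = (\<chi> i. \<bar>proj W g $ i\<bar> + (if i \<in> supp xs then lam + E else 0))"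
  have comp: "\<bar>(xn - xs) $ i\<bar> \<le> r $ i" for i
  proof -
    consider (a) "i \<in> supp xs" | (b) "i \<notin> supp xs" "i \<in> supp xn" | (c) "i \<notin> supp xs" "i \<notin> supp xn" by blast
    then show ?thesis
    proof cases
      case a
      have pg: "proj W g $ i = g $ i" using a unfolding W_def by (simp add: proj_nth)
      have "\<bar>(xs$i + g$i + Ev$i) - xn$i\<bar> \<le> lam" unfolding xn_nth by (rule st_diff[OF lam0])
      moreover have "\<bar>g$i + Ev$i\<bar> \<le> \<bar>g$i\<bar> + E" using EvE[of i] abs_triangle_ineq[of "g$i" "Ev$i"] by linarith
      ultimately have "\<bar>xn$i - xs$i\<bar> \<le> \<bar>g$i\<bar> + (lam + E)" by linarith
      then show ?thesis using a pg unfolding r_def by simp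
    next
      case b
      have pg: "proj W g $ i = g $ i" using b unfolding W_def by (simp add: proj_nth)
      have xs0: "xs $ i = 0" using b by (simp add: supp_def)
      have "\<bar>xn$i\<bar> = max (\<bar>g$i + Ev$i\<bar> - lam) 0" unfolding xn_nth xs0 using st_abs[OF lam0] by simp
      moreover have "\<bar>g$i + Ev$i\<bar> \<le> \<bar>g$i\<bar> + E" using EvE[of i] abs_triangle_ineq[of "g$i" "Ev$i"] by linarith
      ultimately have "\<bar>xn$i\<bar> \<le> \<bar>g$i\<bar>" using lam' tau0 by (simp add: max_def)
      then show ?thesis using b pg xs0 unfolding r_def by simp
    next
      case c
      hence "xs $ i = 0" "xn $ i = 0" by (auto simp: supp_def)
      then show ?thesis unfolding r_def using lam0 E0 by simp
    qed
  qed
  have "norm (xn - xs) \<le> norm r"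
  proof (rule norm_le_componentwise_cart)
    fix i show "norm ((xn - xs) $ i) \<le> norm (r $ i)"
      using comp[of i] abs_ge_self[of "r $ i"] unfolding real_norm_def by linarith
  qed
  also have "norm r \<le> norm ((\<chi> i. \<bar>proj W g $ i\<bar>) :: real^'d) + norm ((\<chi> i. if i \<in> supp xs then lam + E else 0) :: real^'d)"
  proof -
    have "r = (\<chi> i. \<bar>proj W g $ i\<bar>) + (\<chi> i. if i \<in> supp xs then lam + E else 0)"
      unfolding r_def by (simp add: vec_eq_iff)
    then show ?thesis by (simp add: norm_triangle_ineq)
  qed
  also have "norm ((\<chi> i. \<bar>proj W g $ i\<bar>) :: real^'d) \<le> norm (proj W g)"
    by (rule norm_le_componentwise_cart) simp
  also have "norm ((\<chi> i. if i \<in> supp xs then lam + E else 0) :: real^'d) \<le> (lam + E) * sqrt (real s)"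
    by (rule norm_ind) (use lam0 E0 cS in auto)
  finally have fin: "norm (xn - xs) \<le> norm (proj W g) + (lam + E) * sqrt (real s)" by simp
  have "norm (proj W g) \<le> rip_const U (3 * s) * D"
    using b3 nh rip_nonneg[of U "3 * s"] by (meson mult_left_mono order_trans)
  moreover have "(lam + E) * sqrt (real s) = c * D + 2 * sqrt (real s) * E"
    unfolding lam' tau_def using sq by (simp add: algebra_simps)
  ultimately have "norm (xn - xs) \<le> (c + rip_const U (3 * s)) * D + 2 * sqrt (real s) * E"
    using fin by (simp add: algebra_simps)
  then show ?thesis using part1 unfolding c_def E_def Ev_def by simp
qed

theorem theorem2:
  fixes U :: "real^'d^'n" and xstar :: "real^'d" and e y :: "real^'n"
    and s :: nat and x :: "nat \<Rightarrow> real^'d" and \<Delta> lam :: "nat \<Rightarrow> real" and \<gamma> :: real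
  assumes s_pos: "1 \<le> s" and s_d: "2 * s \<le> CARD('d)"
    and sparse: "card (supp xstar) \<le> s"
    and y_def: "y = U *v xstar + e"
    and gamma_def: "\<gamma> = rip_const U s + sqrt 2 * roc_const U s + rip_const U (3 * s)"
    and gamma_lt: "\<gamma> < 1"
    and Delta1: "norm (x 1 - xstar) \<le> \<Delta> 1"
    and Delta_rec: "\<forall>t\<ge>1. \<Delta> (t + 1) = \<gamma> * \<Delta> t + (1 + sqrt 2) * sqrt (real s) * linf (transpose U *v e)"
    and lambda_def: "\<forall>t\<ge>1. lam t = (rip_const U s + sqrt 2 * roc_const U s) / sqrt (real s) * \<Delta> t
                                 + linf (transpose U *v e)"
    and x1: "x 1 = 0"
    and x_rec: "\<forall>t\<ge>1. x (t + 1) = soft_thresh (x t - transpose U *v (U *v x t - y)) (lam t)"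
  shows "\<forall>t::nat. card (supp (x (t + 1)) - supp xstar) \<le> s \<and>
           norm (x (t + 1) - xstar) \<le> \<gamma> ^ t * \<Delta> 1
             + (1 - \<gamma> ^ t) / (1 - \<gamma>) * (1 + sqrt 2) * sqrt (real s) * linf (transpose U *v e)"
proof -
  define E where "E = linf (transpose U *v e)"
  have E0: "E \<ge> 0" unfolding E_def using linf_ge[of "transpose U *v e" undefined] by linarith
  have P: "card (supp (x (n+1)) - supp xstar) \<le> s \<and> norm (x (n+1) - xstar) \<le> \<Delta> (n+1)" for n
  proof (induction n)
    case 0
    then show ?case using x1 Delta1 by simp
  next
    case (Suc n)
    have xr: "x (Suc n + 1) = soft_thresh (x (n+1) - transpose U *v (U *v x (n+1) - (U *v xstar + e))) (lam (n+1))"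
      using x_rec[rule_format, of "n+1"] y_def by simp
    have st: "card (supp (x (Suc n + 1)) - supp xstar) \<le> s \<and>
      norm (x (Suc n + 1) - xstar) \<le> (rip_const U s + sqrt 2 * roc_const U s + rip_const U (3 * s)) * \<Delta> (n+1)
       + 2 * sqrt (real s) * linf (transpose U *v e)"
      by (rule step[OF s_pos s_d sparse _ _ _ xr]) (use Suc.IH lambda_def in auto)
    have "2 * sqrt (real s) * E \<le> (1 + sqrt 2) * sqrt (real s) * E"
      using E0 by (intro mult_right_mono) auto
    moreover have "\<Delta> (Suc n + 1) = \<gamma> * \<Delta> (n+1) + (1 + sqrt 2) * sqrt (real s) * E"
      using Delta_rec[rule_format, of "n+1"] unfolding E_def by simp
    ultimately have "norm (x (Suc n + 1) - xstar) \<le> \<Delta> (Suc n + 1)"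
      using st unfolding gamma_def E_def by linarith
    then show ?case using st by blast
  qed
  have g1: "1 - \<gamma> \<noteq> 0" using gamma_lt by simp
  define K where "K = (1 + sqrt 2) * sqrt (real s) * E"
  have C: "\<Delta> (t+1) = \<gamma> ^ t * \<Delta> 1 + (1 - \<gamma> ^ t) / (1 - \<gamma>) * K" for t
  proof (induction t)
    case 0 then show ?case by simp
  next
    case (Suc t)
    have "\<Delta> (Suc t + 1) = \<gamma> * \<Delta> (t+1) + K"
      using Delta_rec[rule_format, of "t+1"] unfolding E_def K_def by simp
    also have "\<dots> = \<gamma> ^ Suc t * \<Delta> 1 + (\<gamma> * ((1 - \<gamma> ^ t) / (1 - \<gamma>)) + 1) * K"
      unfolding Suc.IH by (simp add: algebra_simps)
    also have "\<gamma> * ((1 - \<gamma> ^ t) / (1 - \<gamma>)) + 1 = (1 - \<gamma> ^ Suc t) / (1 - \<gamma>)"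
    proof -
      have "\<gamma> * ((1 - \<gamma> ^ t) / (1 - \<gamma>)) + 1 = (\<gamma> * (1 - \<gamma> ^ t) + (1 - \<gamma>)) / (1 - \<gamma>)"
        using g1 by (simp add: add_divide_distrib)
      also have "\<gamma> * (1 - \<gamma> ^ t) + (1 - \<gamma>) = 1 - \<gamma> ^ Suc t" by (simp add: algebra_simps)
      finally show ?thesis .
    qed
    finally show ?case .
  qed
  show ?thesis
  proof (intro allI conjI)
    fix t
    show "card (supp (x (t + 1)) - supp xstar) \<le> s" using P[of t] by blast
    have "norm (x (t + 1) - xstar) \<le> \<gamma> ^ t * \<Delta> 1 + (1 - \<gamma> ^ t) / (1 - \<gamma>) * K"
      using P[of t] C[of t] by simp
    then show "norm (x (t + 1) - xstar) \<le> \<gamma> ^ t * \<Delta> 1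
             + (1 - \<gamma> ^ t) / (1 - \<gamma>) * (1 + sqrt 2) * sqrt (real s) * linf (transpose U *v e)"
      unfolding K_def E_def by (simp add: mult.assoc)
  qed
qed

end
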